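(* Let $n>1$. The set $\{N\in\mathcal{G}_n:\mathbb{F}_n/N\text{ is torsion-free}\}$ is $\mathbf{\Pi}^0_1$-complete.
   Context: $\mathbb{F}_n$ is the free group on $\gamma_1,\dots,\gamma_n$. $\mathcal{G}_n$ is the set of normal subgroups $N\trianglelefteq\mathbb{F}_n$, viewed as a subset of $\{0,1\}^{\mathbb{F}_n}$ with the subspace topology of the product of discrete topologies (a compact zero-dimensional Polish space). $\mathbf{\Pi}^0_1$ = closed sets. $A\subseteq X$ is $\mathbf{\Pi}^0_1$-complete if it is closed and for every zero-dimensional Polish space $Y$ and every closed $B\subseteq Y$ there is a continuous $f:Y\to X$ with $f^{-1}[A]=B$. *)

theory Defs
  imports "HOL-Analysis.Analysis" "HOL-Algebra.Coset"
begin

text \<open>Elements are freely reduced words; a letter (i, True) stands for the generator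
  gamma_i and (i, False) for its inverse.\<close>

type_synonym fg_word = "(nat \<times> bool) list"

fun fg_reduced :: "fg_word \<Rightarrow> bool" where
  "fg_reduced [] = True"
| "fg_reduced [x] = True"
| "fg_reduced (x # y # ys) = (\<not> (fst x = fst y \<and> snd x \<noteq> snd y) \<and> fg_reduced (y # ys))"

fun fg_cons :: "nat \<times> bool \<Rightarrow> fg_word \<Rightarrow> fg_word" where
  "fg_cons x [] = [x]"
| "fg_cons x (y # ys) = (if fst x = fst y \<and> snd x \<noteq> snd y then ys else x # y # ys)"

definition fg_mult :: "fg_word \<Rightarrow> fg_word \<Rightarrow> fg_word" where
  "fg_mult xs ys = foldr fg_cons xs ys"

definition free_group :: "nat \<Rightarrow> fg_word monoid" where
  "free_group n = \<lparr> carrier = {w. fg_reduced w \<and> (\<forall>x\<in>set w. fst x < n)},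
                    mult = fg_mult, one = [] \<rparr>"

definition fg_gen :: "nat \<Rightarrow> fg_word" where
  "fg_gen i = [(i, True)]"

definition torsion_free :: "('a, 'b) monoid_scheme \<Rightarrow> bool" where
  "torsion_free G \<longleftrightarrow>
     (\<forall>x\<in>carrier G. x \<noteq> \<one>\<^bsub>G\<^esub> \<longrightarrow> (\<forall>k::nat. k > 0 \<longrightarrow> x [^]\<^bsub>G\<^esub> k \<noteq> \<one>\<^bsub>G\<^esub>))"

text \<open>A point of the product space {0,1}^(F_n) is a function chi from F_n to bool
  (extensional, i.e. undefined off the carrier); it encodes the subset of F_n where it is True.\<close>

definition cube_space :: "nat \<Rightarrow> (fg_word \<Rightarrow> bool) topology" where
  "cube_space n = product_topology (\<lambda>_. discrete_topology (UNIV :: bool set)) (carrier (free_group n))"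

definition set_of_point :: "nat \<Rightarrow> (fg_word \<Rightarrow> bool) \<Rightarrow> fg_word set" where
  "set_of_point n c = {g \<in> carrier (free_group n). c g}"

definition normal_subgroup_space :: "nat \<Rightarrow> (fg_word \<Rightarrow> bool) topology" where
  "normal_subgroup_space n =
     subtopology (cube_space n) {c. set_of_point n c \<lhd> free_group n}"

definition torsion_free_quotients :: "nat \<Rightarrow> (fg_word \<Rightarrow> bool) set" where
  "torsion_free_quotients n =
     {c \<in> topspace (normal_subgroup_space n).
        torsion_free (free_group n Mod set_of_point n c)}"

definition Polish_space :: "'a topology \<Rightarrow> bool" where
  "Polish_space X \<longleftrightarrow> completely_metrizable_space X \<and> separable_space X"

end

theory Submission imports Defs begin
definition finv :: "nat \<times> bool \<Rightarrow> nat \<times> bool" where "finv x = (fst x, \<not> snd x)"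

lemma fg_reduced_tl: "fg_reduced (x # ys) \<Longrightarrow> fg_reduced ys"
  by (cases ys) auto

lemma fg_cons_cancel: "fg_reduced w \<Longrightarrow> fg_cons (finv x) (fg_cons x w) = w"
proof (cases w)
  case (Cons y ys)
  assume r: "fg_reduced w"
  note w = Cons
  obtain i b where x: "x = (i, b)" by (cases x)
  obtain j c where y: "y = (j, c)" by (cases y)
  show ?thesis
  proof (cases "i = j \<and> b \<noteq> c")
    case True
    show ?thesis
    proof (cases ys)
      case Nil
      then show ?thesis using True w x y by (simp add: finv_def)
    next
      case (Cons z zs)
      obtain k e where z: "z = (k, e)" by (cases z)
      have "\<not> (j = k \<and> c \<noteq> e)" using r w Cons y z by simp
      then show ?thesis using True w Cons x y z by (simp add: finv_def)
    qed
  next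
    case False
    then show ?thesis using w x y by (cases b; cases c) (simp_all add: finv_def)
  qed
qed (simp add: finv_def)
lemma fg_mult_Nil [simp]: "fg_mult [] ys = ys" by (simp add: fg_mult_def)
lemma fg_mult_Cons [simp]: "fg_mult (x # xs) ys = fg_cons x (fg_mult xs ys)" by (simp add: fg_mult_def)

lemma fg_reduced_fg_cons: "fg_reduced ys \<Longrightarrow> fg_reduced (fg_cons x ys)"
  by (cases ys) (auto dest: fg_reduced_tl)

lemma fg_reduced_mult: "fg_reduced ys \<Longrightarrow> fg_reduced (fg_mult xs ys)"
  by (induction xs) (auto intro: fg_reduced_fg_cons)

lemma fg_mult_fg_cons: "fg_reduced zs \<Longrightarrow> fg_mult (fg_cons x w) zs = fg_cons x (fg_mult w zs)"
proof (cases w)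
  case (Cons y ys)
  assume r: "fg_reduced zs"
  show ?thesis
  proof (cases "fst x = fst y \<and> snd x \<noteq> snd y")
    case True
    then have xy: "x = finv y" by (cases x; cases y) (auto simp: finv_def)
    have "fg_cons x (fg_cons y (fg_mult ys zs)) = fg_mult ys zs"
      unfolding xy by (rule fg_cons_cancel[OF fg_reduced_mult[OF r]])
    then show ?thesis using Cons True by simp
  next
    case False
    show ?thesis using Cons by (simp only: fg_cons.simps if_not_P[OF False] fg_mult_Cons)
  qed
qed simp

lemma fg_mult_assoc: "fg_reduced zs \<Longrightarrow> fg_mult (fg_mult xs ys) zs = fg_mult xs (fg_mult ys zs)"
  by (induction xs) (simp_all add: fg_mult_fg_cons)

lemma set_fg_cons: "set (fg_cons x ys) \<subseteq> insert x (set ys)"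
  by (cases ys) auto

lemma set_fg_mult: "set (fg_mult xs ys) \<subseteq> set xs \<union> set ys"
  by (induction xs) (use set_fg_cons in fastforce)+

lemma fg_mult_inv: "fg_reduced (xs @ zs) \<Longrightarrow> fg_mult (rev (map finv xs)) (xs @ zs) = zs"
proof (induction xs arbitrary: zs)
  case (Cons x xs)
  have "fg_cons (finv x) (x # xs @ zs) = xs @ zs"
    by (cases "xs @ zs") (auto simp: finv_def)
  then show ?case using Cons fg_reduced_tl[of x "xs @ zs"]
    by (simp add: fg_mult_def)
qed simp

lemma free_group_group: "group (free_group n)"
proof (rule groupI)
  fix x y assume "x \<in> carrier (free_group n)" "y \<in> carrier (free_group n)"
  then show "x \<otimes>\<^bsub>free_group n\<^esub> y \<in> carrier (free_group n)"
    using set_fg_mult[of x y] by (auto simp: free_group_def fg_reduced_mult)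
next
  show "\<one>\<^bsub>free_group n\<^esub> \<in> carrier (free_group n)" by (simp add: free_group_def)
next
  fix x y z assume "x \<in> carrier (free_group n)" "y \<in> carrier (free_group n)" "z \<in> carrier (free_group n)"
  then show "x \<otimes>\<^bsub>free_group n\<^esub> y \<otimes>\<^bsub>free_group n\<^esub> z = x \<otimes>\<^bsub>free_group n\<^esub> (y \<otimes>\<^bsub>free_group n\<^esub> z)"
    by (simp add: free_group_def fg_mult_assoc)
next
  fix x assume "x \<in> carrier (free_group n)"
  then show "\<one>\<^bsub>free_group n\<^esub> \<otimes>\<^bsub>free_group n\<^esub> x = x" by (simp add: free_group_def)
next
  fix x assume x: "x \<in> carrier (free_group n)"
  define y where "y = fg_mult (rev (map finv x)) []"
  have "\<forall>z\<in>set y. fst z < n"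
    using x set_fg_mult[of "rev (map finv x)" "[]"]
    by (fastforce simp: free_group_def y_def finv_def)
  then have "y \<in> carrier (free_group n)"
    by (auto simp: free_group_def y_def fg_reduced_mult)
  moreover have "fg_mult y x = []"
    using x fg_mult_assoc[of x "rev (map finv x)" "[]"] fg_mult_inv[of x "[]"]
    by (simp add: y_def free_group_def)
  ultimately show "\<exists>y\<in>carrier (free_group n). y \<otimes>\<^bsub>free_group n\<^esub> x = \<one>\<^bsub>free_group n\<^esub>"
    by (auto simp: free_group_def)
qed

lemma tf_Mod:
  assumes N: "N \<lhd> G"
  shows "torsion_free (G Mod N) \<longleftrightarrow>
    (\<forall>g\<in>carrier G. g \<notin> N \<longrightarrow> (\<forall>k::nat. k > 0 \<longrightarrow> g [^]\<^bsub>G\<^esub> k \<notin> N))"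
proof -
  interpret normal N G by (rule N)
  have eq: "r_coset G N g = N \<longleftrightarrow> g \<in> N" if "g \<in> carrier G" for g
    using that rcos_self[OF that subgroup_axioms] rcos_const[OF is_group] by auto
  show ?thesis
    unfolding torsion_free_def carrier_FactGroup one_FactGroup
    by (auto simp: FactGroup_pow eq)
qed

definition fgsig :: "fg_word \<Rightarrow> int" where
  "fgsig w = sum_list (map (\<lambda>x. if snd x then 1 else -1) w)"

lemma fgsig_fg_cons: "fgsig (fg_cons x ys) = (if snd x then 1 else -1) + fgsig ys"
  by (cases ys) (auto simp: fgsig_def)

lemma fgsig_Cons: "fgsig (x # xs) = (if snd x then 1 else -1) + fgsig xs"
  by (simp add: fgsig_def)

lemma fgsig_one: "fgsig [] = 0" by (simp add: fgsig_def)

lemma fgsig_mult: "fgsig (fg_mult xs ys) = fgsig xs + fgsig ys"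
  by (induction xs) (auto simp: fgsig_fg_cons fgsig_Cons fgsig_one)

definition NN :: "nat \<Rightarrow> int \<Rightarrow> fg_word set" where
  "NN n k = {g \<in> carrier (free_group n). k dvd fgsig g}"


lemma fgsig_inv: "g \<in> carrier (free_group n) \<Longrightarrow> fgsig (inv\<^bsub>free_group n\<^esub> g) = - fgsig g"
proof -
  interpret G: group "free_group n" by (rule free_group_group)
  assume g: "g \<in> carrier (free_group n)"
  have "g \<otimes>\<^bsub>free_group n\<^esub> inv\<^bsub>free_group n\<^esub> g = \<one>\<^bsub>free_group n\<^esub>" using g by simp
  then have "fg_mult g (inv\<^bsub>free_group n\<^esub> g) = []"
    by (simp add: free_group_def)
  then have "fgsig (fg_mult g (inv\<^bsub>free_group n\<^esub> g)) = 0" by (simp add: fgsig_one)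
  then have "fgsig g + fgsig (inv\<^bsub>free_group n\<^esub> g) = 0"
    by (simp only: fgsig_mult)
  then show ?thesis by simp
qed

lemma fgsig_pow: "g \<in> carrier (free_group n) \<Longrightarrow> fgsig (g [^]\<^bsub>free_group n\<^esub> (k::nat)) = int k * fgsig g"
proof (induction k)
  case 0 then show ?case by (simp add: free_group_def fgsig_one)
next
  case (Suc k)
  then show ?case by (simp add: free_group_def fgsig_mult algebra_simps)
qed

lemma NN_normal: "NN n k \<lhd> free_group n"
proof -
  interpret G: group "free_group n" by (rule free_group_group)
  have sub: "subgroup (NN n k) (free_group n)"
  proof (rule G.subgroupI)
    show "NN n k \<subseteq> carrier (free_group n)" by (auto simp: NN_def)
    show "NN n k \<noteq> {}"
      using G.one_closed by (auto simp: NN_def free_group_def fgsig_one intro!: exI[of _ "[]"])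
    show "inv\<^bsub>free_group n\<^esub> a \<in> NN n k" if "a \<in> NN n k" for a
      using that by (auto simp: NN_def fgsig_inv)
    show "a \<otimes>\<^bsub>free_group n\<^esub> b \<in> NN n k" if "a \<in> NN n k" "b \<in> NN n k" for a b
      using that G.m_closed[of a b] by (auto simp: NN_def) (simp add: free_group_def fgsig_mult)
  qed
  show ?thesis
    unfolding G.normal_inv_iff
  proof (intro conjI ballI sub)
    fix x h assume x: "x \<in> carrier (free_group n)" and h: "h \<in> NN n k"
    have hc: "h \<in> carrier (free_group n)" using h by (simp add: NN_def)
    have "fgsig (x \<otimes>\<^bsub>free_group n\<^esub> h \<otimes>\<^bsub>free_group n\<^esub> inv\<^bsub>free_group n\<^esub> x) = fgsig h"
      using fgsig_inv[OF x] by (simp add: free_group_def fgsig_mult)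
    then show "x \<otimes>\<^bsub>free_group n\<^esub> h \<otimes>\<^bsub>free_group n\<^esub> inv\<^bsub>free_group n\<^esub> x \<in> NN n k"
      using h x hc by (auto simp: NN_def)
  qed
qed

lemma NN_tf0: "torsion_free (free_group n Mod NN n 0)"
  unfolding tf_Mod[OF NN_normal] by (auto simp: NN_def fgsig_pow)

lemma NN_not_tf: assumes "n > 0" "k \<ge> 2" shows "\<not> torsion_free (free_group n Mod NN n k)"
proof -
  have g: "fg_gen 0 \<in> carrier (free_group n)" using assms by (simp add: fg_gen_def free_group_def)
  have s: "fgsig (fg_gen 0) = 1" by (simp add: fg_gen_def fgsig_def)
  have "\<not> k dvd 1" using assms zdvd_imp_le by fastforce
  moreover have "k dvd fgsig (fg_gen 0 [^]\<^bsub>free_group n\<^esub> nat k)"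
    using fgsig_pow[OF g, of "nat k"] s assms by simp
  ultimately show ?thesis
    unfolding tf_Mod[OF NN_normal] using g s assms monoid.nat_pow_closed[OF group.is_monoid[OF free_group_group] g]
    by (auto simp: NN_def intro!: bexI[of _ "fg_gen 0"] exI[of _ "nat k"])
qed

lemma proj_cont:
  assumes "g \<in> carrier (free_group n)"
  shows "continuous_map (normal_subgroup_space n) (discrete_topology UNIV) (\<lambda>c. c g)"
  unfolding normal_subgroup_space_def cube_space_def
  by (rule continuous_map_from_subtopology, rule continuous_map_product_projection) (rule assms)

lemma pow_carrier: "g \<in> carrier (free_group n) \<Longrightarrow> g [^]\<^bsub>free_group n\<^esub> (k::nat) \<in> carrier (free_group n)"
  by (rule monoid.nat_pow_closed[OF group.is_monoid[OF free_group_group]])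

lemma tfq_iff:
  "c \<in> torsion_free_quotients n \<longleftrightarrow> c \<in> topspace (normal_subgroup_space n) \<and>
     (\<forall>g\<in>carrier (free_group n). \<not> c g \<longrightarrow> (\<forall>k::nat. k > 0 \<longrightarrow> \<not> c (g [^]\<^bsub>free_group n\<^esub> k)))"
proof -
  have "c \<in> topspace (normal_subgroup_space n) \<Longrightarrow> set_of_point n c \<lhd> free_group n"
    by (simp add: normal_subgroup_space_def)
  then show ?thesis
    unfolding torsion_free_quotients_def
    using tf_Mod[of "set_of_point n c" "free_group n"] pow_carrier[of _ n]
    by (auto simp: set_of_point_def)
qed

lemma closed_part: "closedin (normal_subgroup_space n) (torsion_free_quotients n)"
proof -
  let ?X = "normal_subgroup_space n"
  let ?F = "free_group n"
  define S where "S = (\<lambda>(g, k::nat). {c\<in>topspace ?X. c g \<in> {False}} \<inter>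
                          {c\<in>topspace ?X. c (g [^]\<^bsub>?F\<^esub> k) \<in> {True}})"
  define U where "U = \<Union>(S ` (carrier ?F \<times> {0<..}))"
  have "openin ?X (S gk)" if gkin: "gk \<in> carrier ?F \<times> {0<..}" for gk
  proof -
    obtain g k where gk: "gk = (g, k)" "g \<in> carrier ?F" using gkin by (cases gk) auto
    show ?thesis unfolding gk S_def using gk(2)
      by (simp only: prod.case) (intro openin_Int openin_continuous_map_preimage[OF proj_cont] pow_carrier; simp)
  qed
  then have "openin ?X U"
    unfolding U_def by (intro openin_Union) blast
  moreover have "topspace ?X - torsion_free_quotients n = U"
    unfolding U_def S_def by (auto simp: tfq_iff) (metis greaterThan_iff)
  ultimately show ?thesis
    by (simp add: closedin_def tfq_iff subset_iff)
qed

lemma cont_disc: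
  assumes "\<And>y. y \<in> topspace Y \<Longrightarrow> \<exists>W. openin Y W \<and> y \<in> W \<and> (\<forall>z\<in>W. h z = h y)"
  shows "continuous_map Y (discrete_topology UNIV) h"
  unfolding continuous_map_def
proof (intro conjI allI impI)
  show "h \<in> topspace Y \<rightarrow> topspace (discrete_topology UNIV)" by simp
  fix U
  show "openin Y {x \<in> topspace Y. h x \<in> U}"
  proof (subst openin_subopen, intro ballI)
    fix x assume x: "x \<in> {x \<in> topspace Y. h x \<in> U}"
    then obtain W where W: "openin Y W" "x \<in> W" "\<forall>z\<in>W. h z = h x" using assms by blast
    have "W \<subseteq> {x \<in> topspace Y. h x \<in> U}"
    proof
      fix z assume z: "z \<in> W"
      then have "z \<in> topspace Y" using openin_subset[OF W(1)] by blast
      moreover have "h z \<in> U" using z W(3) x by simp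
      ultimately show "z \<in> {x \<in> topspace Y. h x \<in> U}" by simp
    qed
    then show "\<exists>T. openin Y T \<and> x \<in> T \<and> T \<subseteq> {x \<in> topspace Y. h x \<in> U}"
      using W(1,2) by blast
  qed
qed

definition mmf :: "(nat \<Rightarrow> bool) \<Rightarrow> int" where
  "mmf P = (if \<exists>k. P k then int (LEAST k. P k) + 2 else 0)"

lemma least_agree:
  fixes P Q :: "nat \<Rightarrow> bool"
  assumes "\<forall>j\<le>N. P j = Q j" "\<exists>k\<le>N. P k"
  shows "(LEAST k. P k) = (LEAST k. Q k)"
proof -
  obtain k where k: "k \<le> N" "P k" using assms by blast
  let ?L = "LEAST k. P k"
  have L: "P ?L" "?L \<le> k" using LeastI[of P k] Least_le[of P k] k by auto
  show ?thesis
  proof (rule sym, rule Least_equality)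
    show "Q ?L" using L k assms(1) by auto
    fix m assume "Q m"
    show "?L \<le> m"
    proof (rule ccontr)
      assume "\<not> ?L \<le> m"
      then have "m < ?L" by simp
      then have "\<not> P m" using not_less_Least by blast
      moreover have "m \<le> N" using \<open>m < ?L\<close> L k by simp
      ultimately show False using \<open>Q m\<close> assms(1) by auto
    qed
  qed
qed

lemma mmf_agree:
  fixes P Q :: "nat \<Rightarrow> bool"
  assumes "\<forall>j\<le>N. P j = Q j" "\<exists>k\<le>N. P k"
  shows "mmf P = mmf Q"
proof -
  have "\<exists>k. Q k" using assms by auto
  then show ?thesis using assms least_agree[OF assms] by (auto simp: mmf_def)
qed

lemma mmf_dvd_small:
  fixes s :: int
  assumes "mmf P dvd s" "s \<noteq> 0" "nat \<bar>s\<bar> \<le> N"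
  shows "\<exists>k\<le>N. P k"
proof -
  have ex: "\<exists>k. P k" using assms(1,2) by (auto simp: mmf_def split: if_splits)
  let ?L = "LEAST k. P k"
  have "\<bar>int ?L + 2\<bar> \<le> \<bar>s\<bar>" using assms ex dvd_imp_le_int[of s "int ?L + 2"] by (auto simp: mmf_def)
  then have "?L \<le> N" using assms(3) by linarith
  then show ?thesis using LeastI_ex[OF ex] by blast
qed

lemma mmf_local:
  fixes s :: int
  assumes "\<forall>j\<le>N. P j = Q j" "nat \<bar>s\<bar> \<le> N"
  shows "(mmf P dvd s) = (mmf Q dvd s)"
proof (cases "s = 0")
  case False
  have sym: "\<forall>j\<le>N. Q j = P j" using assms(1) by auto
  show ?thesis
  proof
    assume "mmf P dvd s"
    then have "\<exists>k\<le>N. P k" using mmf_dvd_small False assms(2) by blast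
    then show "mmf Q dvd s" using mmf_agree[OF assms(1)] \<open>mmf P dvd s\<close> by simp
  next
    assume "mmf Q dvd s"
    then have "\<exists>k\<le>N. Q k" using mmf_dvd_small False assms(2) by blast
    then show "mmf P dvd s" using mmf_agree[OF sym] \<open>mmf Q dvd s\<close> by simp
  qed
qed simp

lemma clopen_seq:
  assumes pol: "Polish_space Y" and dim: "Y dim_le 0" and U: "openin Y U"
  obtains V :: "nat \<Rightarrow> 'a set" where "\<And>k. closedin Y (V k) \<and> openin Y (V k)" "\<Union>(range V) = U"
proof -
  obtain M d where Md: "Metric_space M d" and Y: "Y = Metric_space.mtopology M d"
    using pol unfolding Polish_space_def completely_metrizable_space_def by blast
  interpret Metric_space M d by (rule Md)
  obtain C where C: "countable C" "C \<subseteq> M" "mtopology closure_of C = M"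
    using pol unfolding Polish_space_def separable_space_def Y by auto
  define P where "P V \<longleftrightarrow> closedin Y V \<and> openin Y V \<and> V \<subseteq> U" for V
  define BB where "BB = (\<lambda>(c,k). mball c (inverse (real (Suc k)))) ` (C \<times> (UNIV::nat set))"
  define CC where "CC = (\<lambda>b. SOME V. P V \<and> b \<subseteq> V) ` {b\<in>BB. \<exists>V. P V \<and> b \<subseteq> V}"
  have cBB: "countable BB" unfolding BB_def using C(1) by auto
  have cc: "countable CC" unfolding CC_def
    by (rule countable_image, rule countable_subset[OF _ cBB]) auto
  have PCC: "P V" if VCC: "V \<in> CC" for V
  proof -
    obtain b where b: "V = (SOME V. P V \<and> b \<subseteq> V)" "\<exists>V. P V \<and> b \<subseteq> V"
      using VCC unfolding CC_def by blast
    show ?thesis using someI_ex[OF b(2)] b(1) by simp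
  qed
  have cover: "U \<subseteq> \<Union>CC"
  proof
    fix x assume xU: "x \<in> U"
    have xM: "x \<in> M" using openin_subset[OF U] xU Y by auto
    have "neighbourhood_base_at x (\<lambda>U. closedin Y U \<and> openin Y U) Y"
      using dim xM Y unfolding dimension_le_0_neighbourhood_base_of_clopen neighbourhood_base_of_def by auto
    then have nb: "\<exists>W V. openin Y W \<and> (closedin Y V \<and> openin Y V) \<and> x \<in> W \<and> W \<subseteq> V \<and> V \<subseteq> U"
      using U xU unfolding neighbourhood_base_at_def by simp
    then obtain W V where WV: "openin Y W" "closedin Y V" "openin Y V" "x \<in> W" "W \<subseteq> V" "V \<subseteq> U"
      by blast
    have "openin mtopology W" using WV(1) Y by simp
    then have "\<forall>x. x \<in> W \<longrightarrow> (\<exists>r>0. mball x r \<subseteq> W)" by (simp add: openin_mtopology)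
    then obtain r where r: "r > 0" "mball x r \<subseteq> W"
      using WV(4) by blast
    obtain k where k: "inverse (real (Suc k)) < r / 2" using reals_Archimedean[of "r/2"] r by auto
    define a where "a = inverse (real (Suc k))"
    have a: "a > 0" "a < r/2" using k by (auto simp: a_def)
    have "x \<in> mtopology closure_of C" using C xM by simp
    then have cl: "\<forall>T. x \<in> T \<and> openin mtopology T \<longrightarrow> (\<exists>y. y \<in> C \<and> y \<in> T)"
      unfolding in_closure_of by simp
    have "x \<in> mball x a" using xM a by simp
    then have "\<exists>y. y \<in> C \<and> y \<in> mball x a" using cl openin_mball by blast
    then obtain c where c: "c \<in> C" "c \<in> mball x a" by blast
    have xc: "x \<in> mball c a" using c xM C(2) commute by auto
    have "mball c a \<subseteq> mball x r"
      by (rule mball_subset) (use c a xM commute in auto)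
    then have sub: "mball c a \<subseteq> V" using r WV by auto
    have bBB: "mball c a \<in> BB" unfolding BB_def a_def using c by auto
    have ex: "\<exists>V. P V \<and> mball c a \<subseteq> V" using sub WV by (auto simp: P_def)
    let ?V = "SOME V. P V \<and> mball c a \<subseteq> V"
    have "P ?V \<and> mball c a \<subseteq> ?V" using someI_ex[OF ex] .
    moreover have "?V \<in> CC" unfolding CC_def using bBB ex by auto
    ultimately show "x \<in> \<Union>CC" using xc by auto
  qed
  have UCC: "\<Union>CC = U"
    using cover PCC by (auto simp: P_def)
  show ?thesis
  proof (cases "CC = {}")
    case True
    then show ?thesis using that[of "\<lambda>_. {}"] UCC by auto
  next
    case False
    then show ?thesis using that[of "from_nat_into CC"] UCC cc PCC
      by (simp add: P_def from_nat_into)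
  qed
qed

theorem mainTheorem10:
  fixes n :: nat
  assumes "n > 1"
  shows "closedin (normal_subgroup_space n) (torsion_free_quotients n) \<and>
         (\<forall>(Y :: 'b topology) (B :: 'b set).
            Polish_space Y \<and> Y dim_le 0 \<and> closedin Y B \<longrightarrow>
            (\<exists>f. continuous_map Y (normal_subgroup_space n) f \<and>
                 {y \<in> topspace Y. f y \<in> torsion_free_quotients n} = B))"
proof (intro conjI allI impI)
  show "closedin (normal_subgroup_space n) (torsion_free_quotients n)" by (rule closed_part)
  fix Y :: "'b topology" and B :: "'b set"
  assume H: "Polish_space Y \<and> Y dim_le 0 \<and> closedin Y B"
  have U: "openin Y (topspace Y - B)" using H by (simp add: openin_diff)
  have pol: "Polish_space Y" and dim: "Y dim_le 0" using H by simp_all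
  obtain V :: "nat \<Rightarrow> 'b set" where V: "\<And>k. closedin Y (V k) \<and> openin Y (V k)" "\<Union>(range V) = topspace Y - B"
    by (rule clopen_seq[OF pol dim U], rule that, assumption+)
  define mm where "mm y = mmf (\<lambda>k. y \<in> V k)" for y
  define f where "f y = (\<lambda>g. if g \<in> carrier (free_group n) then mm y dvd fgsig g else undefined)" for y
  have sop: "set_of_point n (f y) = NN n (mm y)" for y
    by (auto simp: set_of_point_def NN_def f_def)
  have fext: "f y \<in> extensional (carrier (free_group n))" for y
    by (auto simp: f_def extensional_def)
  have ftop: "f y \<in> topspace (normal_subgroup_space n)" for y
    unfolding normal_subgroup_space_def cube_space_def
    using NN_normal sop fext by (auto simp: PiE_def)
  have tfy: "f y \<in> torsion_free_quotients n \<longleftrightarrow> torsion_free (free_group n Mod NN n (mm y))" for y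
    using ftop[of y] sop[of y] by (simp add: torsion_free_quotients_def)
  show "\<exists>f. continuous_map Y (normal_subgroup_space n) f \<and>
                 {y \<in> topspace Y. f y \<in> torsion_free_quotients n} = B"
  proof (intro exI conjI)
    have "continuous_map Y (cube_space n) f"
      unfolding cube_space_def continuous_map_componentwise
    proof (intro conjI ballI)
      show "f ` topspace Y \<subseteq> extensional (carrier (free_group n))" using fext by auto
      fix g assume g: "g \<in> carrier (free_group n)"
      show "continuous_map Y (discrete_topology UNIV) (\<lambda>x. f x g)"
      proof (rule cont_disc)
        fix y0 assume y0: "y0 \<in> topspace Y"
        define N where "N = nat \<bar>fgsig g\<bar>"
        define W where "W = topspace Y \<inter> \<Inter>((\<lambda>j. if y0 \<in> V j then V j else topspace Y - V j) ` {..N})"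
        have "openin Y W"
          unfolding W_def
          by (intro openin_Int openin_topspace openin_Inter) (auto simp: V openin_diff)
        moreover have "y0 \<in> W" using y0 by (auto simp: W_def)
        moreover have "\<forall>z\<in>W. f z g = f y0 g"
        proof
          fix z assume "z \<in> W"
          then have "\<forall>j\<le>N. (z \<in> V j) = (y0 \<in> V j)" by (auto simp: W_def split: if_splits)
          then show "f z g = f y0 g"
            using mmf_local[of N "\<lambda>k. z \<in> V k" "\<lambda>k. y0 \<in> V k" "fgsig g"] g
            by (simp add: f_def mm_def N_def)
        qed
        ultimately show "\<exists>W. openin Y W \<and> y0 \<in> W \<and> (\<forall>z\<in>W. f z g = f y0 g)" by blast
      qed
    qed
    then show "continuous_map Y (normal_subgroup_space n) f"
      unfolding normal_subgroup_space_def
      by (rule continuous_map_into_subtopology) (use NN_normal sop in auto)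
  next
    have BY: "B \<subseteq> topspace Y" using H closedin_subset by blast
    show "{y \<in> topspace Y. f y \<in> torsion_free_quotients n} = B"
    proof (intro equalityI subsetI)
      fix y assume y: "y \<in> {y \<in> topspace Y. f y \<in> torsion_free_quotients n}"
      show "y \<in> B"
      proof (rule ccontr)
        assume "y \<notin> B"
        then obtain k where "y \<in> V k" using y V(2) by blast
        then have "mm y \<ge> 2" by (auto simp: mm_def mmf_def)
        then have "\<not> torsion_free (free_group n Mod NN n (mm y))"
          using NN_not_tf assms by simp
        then show False using y tfy by blast
      qed
    next
      fix y assume y: "y \<in> B"
      have "\<forall>k. y \<notin> V k" using y V(2) by blast
      then have "mm y = 0" by (auto simp: mm_def mmf_def)
      then show "y \<in> {y \<in> topspace Y. f y \<in> torsion_free_quotients n}"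
        using y BY tfy NN_tf0 by auto
    qed
  qed
qed

end
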